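(* Let $L$ be a finite self-dual lattice and let $W_1,W_2\subseteq L$ both contain all join-irreducible elements of $L$. Then the induced subgraphs $\nabla_L^{W_1}$ and $\nabla_L^{W_2}$ of the duality graph $\nabla_L$ are isomorphic if and only if there exists $\sigma\in\mathrm{Aut}(L)$ with $\sigma(W_1)=W_2$.
   Context: A self-dual lattice is a lattice $L$ with a map $a\mapsto a^\perp$ of $L$ to itself that is involutive and order-reversing. $\mathrm{Aut}(L)$ is the group of lattice automorphisms $\sigma$ of $L$ satisfying $\sigma(a^\perp)=\sigma(a)^\perp$ for all $a$. The duality graph $\nabla_L$ has vertex set $L$, with $a,b$ adjacent iff $a\le b^\perp$ (loops allowed); $\nabla_L^W$ is its induced subgraph on $W$ (vertex set $W$, inherited adjacency). An element $a$ is (completely) join-irreducible if $a=\bigvee A$ for a subset $A\subseteq L$ implies $a\in A$. *)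

theory Defs
  imports Main
begin

definition self_dual :: "('a::lattice \<Rightarrow> 'a) \<Rightarrow> bool" where
  "self_dual perp \<longleftrightarrow> (\<forall>a. perp (perp a) = a) \<and> (\<forall>a b. a \<le> b \<longrightarrow> perp b \<le> perp a)"

definition is_join :: "'a::order \<Rightarrow> 'a set \<Rightarrow> bool" where
  "is_join a A \<longleftrightarrow> (\<forall>x\<in>A. x \<le> a) \<and> (\<forall>u. (\<forall>x\<in>A. x \<le> u) \<longrightarrow> a \<le> u)"

definition join_irreducible :: "'a::order \<Rightarrow> bool" where
  "join_irreducible a \<longleftrightarrow> (\<forall>A. is_join a A \<longrightarrow> a \<in> A)"

definition sd_aut :: "('a::lattice \<Rightarrow> 'a) \<Rightarrow> ('a \<Rightarrow> 'a) \<Rightarrow> bool" where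
  "sd_aut perp \<sigma> \<longleftrightarrow> bij \<sigma> \<and> (\<forall>a b. \<sigma> (sup a b) = sup (\<sigma> a) (\<sigma> b))
     \<and> (\<forall>a b. \<sigma> (inf a b) = inf (\<sigma> a) (\<sigma> b)) \<and> (\<forall>a. \<sigma> (perp a) = perp (\<sigma> a))"

text \<open>Adjacency in the duality graph: a ~ b iff a \<le> b^perp (loops allowed).\<close>
definition dual_adj :: "('a::order \<Rightarrow> 'a) \<Rightarrow> 'a \<Rightarrow> 'a \<Rightarrow> bool" where
  "dual_adj perp a b \<longleftrightarrow> a \<le> perp b"

definition induced_dual_iso :: "('a::order \<Rightarrow> 'a) \<Rightarrow> 'a set \<Rightarrow> 'a set \<Rightarrow> bool" where
  "induced_dual_iso perp W1 W2 \<longleftrightarrow> (\<exists>f. bij_betw f W1 W2 \<and>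
     (\<forall>a\<in>W1. \<forall>b\<in>W1. dual_adj perp a b \<longleftrightarrow> dual_adj perp (f a) (f b)))"

end

theory Submission
  imports Defs
begin

lemma K_aux:
  fixes y :: "'a::{finite,order}"
  shows "\<forall>x::'a. card {z. z < x} = n \<longrightarrow> (\<forall>j. join_irreducible j \<longrightarrow> j \<le> x \<longrightarrow> j \<le> y) \<longrightarrow> x \<le> y"
proof (induction n rule: less_induct)
  case (less n)
  show ?case
  proof (intro allI impI)
    fix x :: 'a
    assume cx: "card {z. z<x} = n" and H: "\<forall>j. join_irreducible j \<longrightarrow> j \<le> x \<longrightarrow> j \<le> y"
    show "x \<le> y"
    proof (cases "join_irreducible x")
      case True then show ?thesis using H by auto
    next
      case False
      then obtain A where A: "is_join x A" "x \<notin> A" unfolding join_irreducible_def by auto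
      have "\<forall>a\<in>A. a \<le> y"
      proof
        fix a assume aA: "a \<in> A"
        have "a \<le> x" using A aA unfolding is_join_def by auto
        hence ax: "a < x" using A(2) aA by (metis order.not_eq_order_implies_strict)
        have sub: "{z. z < a} \<subset> {z. z < x}" using ax by auto
        have "card {z. z<a} < n" using cx psubset_card_mono[OF _ sub] by simp
        then show "a \<le> y" using less.IH[rule_format, OF _ refl] H ax
          by (meson less_imp_le order_trans)
      qed
      then show ?thesis using A(1) unfolding is_join_def by auto
    qed
  qed
qed

lemma K:
  fixes x y :: "'a::{finite,order}"
  assumes "\<And>j. join_irreducible j \<Longrightarrow> j \<le> x \<Longrightarrow> j \<le> y"
  shows "x \<le> y"
  using K_aux[where y=y and n="card {z. z < x}"] assms by blast

lemma L3:
  fixes x :: "'a::{finite,order}"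
  shows "is_join x {j. join_irreducible j \<and> j \<le> x}"
  unfolding is_join_def using K by (auto intro: K)

lemma sd_facts:
  assumes "self_dual perp"
  shows "perp (perp a) = a" "a \<le> b \<Longrightarrow> perp b \<le> perp a"
  using assms unfolding self_dual_def by auto

lemma swap:
  fixes perp :: "'a::lattice \<Rightarrow> 'a"
  assumes "self_dual perp"
  shows "a \<le> perp b \<longleftrightarrow> b \<le> perp a"
  by (metis assms sd_facts)

lemma L1:
  fixes perp :: "'a::lattice \<Rightarrow> 'a"
  assumes sd: "self_dual perp" and j: "is_join a S"
  shows "y \<le> perp a \<longleftrightarrow> (\<forall>s\<in>S. y \<le> perp s)"
proof
  assume "y \<le> perp a"
  hence "a \<le> perp y" using swap[OF sd] by auto
  thus "\<forall>s\<in>S. y \<le> perp s" using j swap[OF sd] unfolding is_join_def by (meson order_trans)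
next
  assume "\<forall>s\<in>S. y \<le> perp s"
  hence "\<forall>s\<in>S. s \<le> perp y" using swap[OF sd] by auto
  hence "a \<le> perp y" using j unfolding is_join_def by auto
  thus "y \<le> perp a" using swap[OF sd] by auto
qed

lemma L2:
  fixes perp :: "'a::{finite,lattice} \<Rightarrow> 'a"
  assumes sd: "self_dual perp" and JW: "{a. join_irreducible a} \<subseteq> W"
    and P: "\<forall>y\<in>W. y \<le> perp a \<longleftrightarrow> (\<forall>s\<in>S. y \<le> perp s)"
  shows "is_join a S"
  unfolding is_join_def
proof (intro conjI ballI allI impI)
  fix s assume sS: "s \<in> S"
  have "perp a \<le> perp s"
    by (rule K) (use P JW sS in auto)
  thus "s \<le> a" using sd_facts[OF sd] by metis
next
  fix u assume u: "\<forall>x\<in>S. x \<le> u"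
  have "perp u \<le> perp a"
  proof (rule K)
    fix j assume ji: "join_irreducible j" and "j \<le> perp u"
    hence "u \<le> perp j" using swap[OF sd] by auto
    hence "\<forall>s\<in>S. j \<le> perp s" using u swap[OF sd] by (meson order_trans)
    thus "j \<le> perp a" using P JW ji by auto
  qed
  thus "a \<le> u" using sd_facts[OF sd] by metis
qed

lemma transport:
  fixes perp :: "'a::{finite,lattice} \<Rightarrow> 'a"
  assumes sd: "self_dual perp" and J1: "{a. join_irreducible a} \<subseteq> W1"
    and J2: "{a. join_irreducible a} \<subseteq> W2"
    and bij: "bij_betw f W1 W2" and adj: "\<forall>a\<in>W1. \<forall>b\<in>W1. a \<le> perp b \<longleftrightarrow> f a \<le> perp (f b)"
    and aW: "a \<in> W1" and ji: "join_irreducible a"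
  shows "join_irreducible (f a)"
proof (rule ccontr)
  assume nj: "\<not> join_irreducible (f a)"
  define S' where "S' = {j. join_irreducible j \<and> j \<le> f a}"
  have fS': "f a \<notin> S'" using nj S'_def by auto
  have S'W: "S' \<subseteq> W2" using J2 S'_def by auto
  have P2: "\<forall>y. y \<le> perp (f a) \<longleftrightarrow> (\<forall>s\<in>S'. y \<le> perp s)"
    unfolding S'_def using L1[OF sd L3] by (intro allI) (rule L1[OF sd L3])
  define S where "S = inv_into W1 f ` S'"
  have SW: "S \<subseteq> W1" using S'W bij S_def by (auto simp: bij_betw_def inv_into_into)
  have fS: "f ` S = S'" using S'W bij S_def by (force simp: bij_betw_def f_inv_into_f)
  have P1: "\<forall>y\<in>W1. y \<le> perp a \<longleftrightarrow> (\<forall>s\<in>S. y \<le> perp s)"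
  proof
    fix y assume yW: "y \<in> W1"
    have "y \<le> perp a \<longleftrightarrow> f y \<le> perp (f a)" using adj yW aW by auto
    also have "\<dots> \<longleftrightarrow> (\<forall>s\<in>S'. f y \<le> perp s)" using P2 by auto
    also have "\<dots> \<longleftrightarrow> (\<forall>s\<in>S. f y \<le> perp (f s))" using fS by auto
    also have "\<dots> \<longleftrightarrow> (\<forall>s\<in>S. y \<le> perp s)" using adj yW SW by auto
    finally show "y \<le> perp a \<longleftrightarrow> (\<forall>s\<in>S. y \<le> perp s)" .
  qed
  have "is_join a S" by (rule L2[OF sd J1 P1])
  hence "a \<in> S" using ji unfolding join_irreducible_def by auto
  hence "f a \<in> S'" using fS by auto
  thus False using fS' by auto
qed

lemma L4:
  fixes perp :: "'a::{finite,lattice} \<Rightarrow> 'a"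
  assumes sd: "self_dual perp" and JW: "{a. join_irreducible a} \<subseteq> W"
  shows "a \<le> c \<longleftrightarrow> (\<forall>y\<in>W. y \<le> perp c \<longrightarrow> y \<le> perp a)"
proof
  assume "a \<le> c"
  hence "perp c \<le> perp a" using sd_facts[OF sd] by auto
  thus "\<forall>y\<in>W. y \<le> perp c \<longrightarrow> y \<le> perp a" by auto
next
  assume "\<forall>y\<in>W. y \<le> perp c \<longrightarrow> y \<le> perp a"
  hence "perp c \<le> perp a" using JW by (auto intro: K)
  thus "a \<le> c" using sd_facts[OF sd] by metis
qed

lemma L5:
  fixes perp :: "'a::{finite,lattice} \<Rightarrow> 'a"
  assumes sd: "self_dual perp"
  shows "k \<le> perp y \<longleftrightarrow> (\<forall>j. join_irreducible j \<longrightarrow> j \<le> y \<longrightarrow> k \<le> perp j)"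
proof
  assume "k \<le> perp y"
  thus "\<forall>j. join_irreducible j \<longrightarrow> j \<le> y \<longrightarrow> k \<le> perp j"
    using sd_facts[OF sd] by (meson order_trans)
next
  assume H: "\<forall>j. join_irreducible j \<longrightarrow> j \<le> y \<longrightarrow> k \<le> perp j"
  have "y \<le> perp k" by (rule K) (use H swap[OF sd] in blast)
  thus "k \<le> perp y" using swap[OF sd] by auto
qed

theorem mainTheorem19:
  fixes perp :: "'a::{finite, lattice} \<Rightarrow> 'a"
    and W1 W2 :: "'a set"
  assumes "self_dual perp"
    and "{a. join_irreducible a} \<subseteq> W1"
    and "{a. join_irreducible a} \<subseteq> W2"
  shows "induced_dual_iso perp W1 W2 \<longleftrightarrow> (\<exists>\<sigma>. sd_aut perp \<sigma> \<and> \<sigma> ` W1 = W2)"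
proof
  assume "\<exists>\<sigma>. sd_aut perp \<sigma> \<and> \<sigma> ` W1 = W2"
  then obtain \<sigma> where s: "sd_aut perp \<sigma>" and sW: "\<sigma> ` W1 = W2" by blast
  have bs: "bij \<sigma>" and si: "\<And>a b. \<sigma> (inf a b) = inf (\<sigma> a) (\<sigma> b)"
    and sp: "\<And>a. \<sigma> (perp a) = perp (\<sigma> a)" using s unfolding sd_aut_def by auto
  have mono: "a \<le> b \<longleftrightarrow> \<sigma> a \<le> \<sigma> b" for a b
  proof
    assume "a \<le> b" thus "\<sigma> a \<le> \<sigma> b" using si[of a b] by (metis inf.absorb_iff1)
  next
    assume "\<sigma> a \<le> \<sigma> b"
    hence "\<sigma> (inf a b) = \<sigma> a" using si by (simp add: inf.absorb1)
    hence "inf a b = a" using bs unfolding bij_def inj_def by blast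
    thus "a \<le> b" by (metis inf.absorb_iff1)
  qed
  show "induced_dual_iso perp W1 W2"
    unfolding induced_dual_iso_def dual_adj_def
  proof (intro exI conjI ballI)
    show "bij_betw \<sigma> W1 W2" using bs sW by (metis bij_betw_subset subset_UNIV)
    fix a b show "a \<le> perp b \<longleftrightarrow> \<sigma> a \<le> perp (\<sigma> b)" using mono sp by metis
  qed
next
  assume "induced_dual_iso perp W1 W2"
  then obtain f where bij: "bij_betw f W1 W2"
    and adj: "\<forall>a\<in>W1. \<forall>b\<in>W1. a \<le> perp b \<longleftrightarrow> f a \<le> perp (f b)"
    unfolding induced_dual_iso_def dual_adj_def by blast
  note sd = assms(1)
  define J where "J = {a::'a. join_irreducible a}"
  have J1: "J \<subseteq> W1" and J2: "J \<subseteq> W2" using assms J_def by auto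
  define h where "h = inv_into W1 f"
  have bijh: "bij_betw h W2 W1" using bij h_def by (simp add: bij_betw_inv_into)
  have fh: "\<And>b. b \<in> W2 \<Longrightarrow> f (h b) = b" using bij h_def by (simp add: bij_betw_inv_into_right)
  have hW: "\<And>b. b \<in> W2 \<Longrightarrow> h b \<in> W1" using bijh by (auto simp: bij_betw_def)
  have adjh: "\<forall>a\<in>W2. \<forall>b\<in>W2. a \<le> perp b \<longleftrightarrow> h a \<le> perp (h b)"
    using adj fh hW by metis
  have fJ: "f ` J = J"
  proof
    show "f ` J \<subseteq> J" using transport[OF sd assms(2,3) bij adj] J1 J_def by auto
    show "J \<subseteq> f ` J"
    proof
      fix b assume bJ: "b \<in> J"
      have "h b \<in> J" using transport[OF sd assms(3,2) bijh adjh] J2 bJ J_def by auto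
      thus "b \<in> f ` J" using fh J2 bJ by (metis image_eqI subsetD)
    qed
  qed
  have injf: "inj_on f J" using bij J1 by (meson bij_betw_def inj_on_subset)
  have ford: "a \<le> c \<longleftrightarrow> f a \<le> f c" if "a \<in> W1" "c \<in> W1" for a c
  proof -
    have "a \<le> c \<longleftrightarrow> (\<forall>y\<in>W1. y \<le> perp c \<longrightarrow> y \<le> perp a)" using L4[OF sd assms(2)] .
    also have "\<dots> \<longleftrightarrow> (\<forall>y\<in>W1. f y \<le> perp (f c) \<longrightarrow> f y \<le> perp (f a))" using adj that by auto
    also have "\<dots> \<longleftrightarrow> (\<forall>y\<in>W2. y \<le> perp (f c) \<longrightarrow> y \<le> perp (f a))"
      using bij by (auto simp: bij_betw_def)
    also have "\<dots> \<longleftrightarrow> f a \<le> f c" by (rule L4[OF sd assms(3), symmetric])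
    finally show ?thesis .
  qed
  have adjJ: "f a \<le> perp (f b) \<longleftrightarrow> a \<le> perp b" if "a \<in> J" "b \<in> J" for a b
    using adj that J1 by blast
  have fJJ: "f a \<in> J" if "a \<in> J" for a using fJ that by blast
  define D where "D x = {j\<in>J. j \<le> x}" for x
  have leD: "x \<le> y \<longleftrightarrow> D x \<subseteq> D y" for x y
  proof
    assume xy: "x \<le> y"
    show "D x \<subseteq> D y" unfolding D_def using xy order_trans by blast
  next
    assume H: "D x \<subseteq> D y"
    show "x \<le> y" by (rule K) (use H in \<open>auto simp: D_def J_def\<close>)
  qed
  have Dinj: "x = y" if "D x = D y" for x y
  proof -
    have "x \<le> y" "y \<le> x" using leD that by auto
    thus ?thesis by (rule order.antisym)
  qed
  have Dperp: "D (perp y) = {k\<in>J. \<forall>j\<in>D y. k \<le> perp j}" for y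
  proof (rule set_eqI)
    fix k show "k \<in> D (perp y) \<longleftrightarrow> k \<in> {k\<in>J. \<forall>j\<in>D y. k \<le> perp j}"
      using L5[OF sd, of k y] by (auto simp: D_def J_def)
  qed
  have Dx: "D x = {j\<in>J. \<forall>k\<in>D (perp x). j \<le> perp k}" for x
    using Dperp[of "perp x"] sd_facts[OF sd] by simp
  define t where "t = Sup_fin (UNIV :: 'a set)"
  have tt: "z \<le> t" for z unfolding t_def by (simp add: Sup_fin.coboundedI)
  have Kex: "\<exists>y. D y = {j\<in>J. \<forall>k\<in>K. j \<le> perp k}" for K
  proof
    let ?y = "Inf_fin (insert t (perp ` K))"
    show "D ?y = {j\<in>J. \<forall>k\<in>K. j \<le> perp k}"
      unfolding D_def using tt by (auto simp: Inf_fin.bounded_iff)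
  qed
  have ex: "\<exists>y. D y = f ` D x" for x
  proof -
    obtain y where y: "D y = {j\<in>J. \<forall>k\<in>f ` D (perp x). j \<le> perp k}" using Kex[of "f ` D (perp x)"] by blast
    have "{j\<in>J. \<forall>k\<in>f ` D (perp x). j \<le> perp k} = f ` {j\<in>J. \<forall>k\<in>D (perp x). j \<le> perp k}"
    proof
      show "{j\<in>J. \<forall>k\<in>f ` D (perp x). j \<le> perp k} \<subseteq> f ` {j\<in>J. \<forall>k\<in>D (perp x). j \<le> perp k}"
      proof
        fix j assume j: "j \<in> {j\<in>J. \<forall>k\<in>f ` D (perp x). j \<le> perp k}"
        then obtain j' where j': "j' \<in> J" "j = f j'" using fJ by auto
        have "\<forall>k\<in>D (perp x). j' \<le> perp k"
        proof
          fix k assume k: "k \<in> D (perp x)"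
          hence kJ: "k \<in> J" unfolding D_def by blast
          have "f k \<in> f ` D (perp x)" using k by blast
          hence "f j' \<le> perp (f k)" using j j' by blast
          thus "j' \<le> perp k" using adjJ[OF j'(1) kJ] by blast
        qed
        thus "j \<in> f ` {j\<in>J. \<forall>k\<in>D (perp x). j \<le> perp k}" using j' by auto
      qed
      show "f ` {j\<in>J. \<forall>k\<in>D (perp x). j \<le> perp k} \<subseteq> {j\<in>J. \<forall>k\<in>f ` D (perp x). j \<le> perp k}"
      proof
        fix j assume "j \<in> f ` {j\<in>J. \<forall>k\<in>D (perp x). j \<le> perp k}"
        then obtain j' where j': "j' \<in> J" "\<forall>k\<in>D (perp x). j' \<le> perp k" "j = f j'" by blast
        have "\<forall>k\<in>f ` D (perp x). j \<le> perp k"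
        proof
          fix k assume "k \<in> f ` D (perp x)"
          then obtain k' where k': "k' \<in> D (perp x)" "k = f k'" by blast
          hence k'J: "k' \<in> J" unfolding D_def by blast
          show "j \<le> perp k" using adjJ[OF j'(1) k'J] j' k' by blast
        qed
        thus "j \<in> {j\<in>J. \<forall>k\<in>f ` D (perp x). j \<le> perp k}" using fJJ j' by blast
      qed
    qed
    thus ?thesis using y Dx by metis
  qed
  define \<sigma> where "\<sigma> x = (THE y. D y = f ` D x)" for x
  have Ds: "D (\<sigma> x) = f ` D x" for x
  proof -
    obtain y0 where y0: "D y0 = f ` D x" using ex[of x] by blast
    have "(THE y. D y = f ` D x) = y0"
    proof (rule the_equality)
      show "D y0 = f ` D x" by (rule y0)
      fix y assume "D y = f ` D x"
      hence "D y = D y0" using y0 by simp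
      thus "y = y0" by (rule Dinj)
    qed
    thus ?thesis unfolding \<sigma>_def using y0 by simp
  qed
  have DJ: "D x \<subseteq> J" for x unfolding D_def by auto
  have fsub: "f ` A \<subseteq> f ` B \<longleftrightarrow> A \<subseteq> B" if "A \<subseteq> J" "B \<subseteq> J" for A B
  proof
    assume H: "f ` A \<subseteq> f ` B"
    show "A \<subseteq> B"
    proof
      fix a assume aA: "a \<in> A"
      hence "f a \<in> f ` B" using H by blast
      thus "a \<in> B" using inj_on_image_mem_iff[OF injf] that aA by blast
    qed
  next
    assume "A \<subseteq> B" thus "f ` A \<subseteq> f ` B" by (rule image_mono)
  qed
  have smono: "x \<le> y \<longleftrightarrow> \<sigma> x \<le> \<sigma> y" for x y
  proof -
    have "x \<le> y \<longleftrightarrow> D x \<subseteq> D y" by (rule leD)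
    also have "\<dots> \<longleftrightarrow> f ` D x \<subseteq> f ` D y" by (rule fsub[OF DJ DJ, symmetric])
    also have "\<dots> \<longleftrightarrow> D (\<sigma> x) \<subseteq> D (\<sigma> y)" by (simp only: Ds)
    also have "\<dots> \<longleftrightarrow> \<sigma> x \<le> \<sigma> y" by (rule leD[symmetric])
    finally show ?thesis .
  qed
  have sinj: "inj \<sigma>"
  proof (rule injI)
    fix x y assume e: "\<sigma> x = \<sigma> y"
    have "x \<le> y" using smono[of x y] e by simp
    moreover have "y \<le> x" using smono[of y x] e by simp
    ultimately show "x = y" by (rule order.antisym)
  qed
  have sinj_dummy: True
  proof -
    show True by simp
  qed
  have ssurj: "surj \<sigma>" by (rule finite_UNIV_inj_surj[OF finite_UNIV sinj])
  have ssup: "\<sigma> (sup a b) = sup (\<sigma> a) (\<sigma> b)" for a b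
  proof (rule order.antisym)
    obtain c where c: "sup (\<sigma> a) (\<sigma> b) = \<sigma> c" using ssurj by (metis surjD)
    have "a \<le> c" "b \<le> c" using c smono by (metis sup.cobounded1 sup.cobounded2)+
    thus "\<sigma> (sup a b) \<le> sup (\<sigma> a) (\<sigma> b)" using c smono by simp
    show "sup (\<sigma> a) (\<sigma> b) \<le> \<sigma> (sup a b)" using smono by simp
  qed
  have sinf: "\<sigma> (inf a b) = inf (\<sigma> a) (\<sigma> b)" for a b
  proof (rule order.antisym)
    obtain c where c: "inf (\<sigma> a) (\<sigma> b) = \<sigma> c" using ssurj by (metis surjD)
    have "c \<le> a" "c \<le> b" using c smono by (metis inf.cobounded1 inf.cobounded2)+
    thus "inf (\<sigma> a) (\<sigma> b) \<le> \<sigma> (inf a b)" using c smono by simp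
    show "\<sigma> (inf a b) \<le> inf (\<sigma> a) (\<sigma> b)" using smono by simp
  qed
  have sperp: "\<sigma> (perp x) = perp (\<sigma> x)" for x
  proof (rule Dinj)
    have "D (\<sigma> (perp x)) = f ` {k\<in>J. \<forall>j\<in>D x. k \<le> perp j}" using Ds Dperp by simp
    also have "\<dots> = {k\<in>J. \<forall>j\<in>f ` D x. k \<le> perp j}"
    proof
      show "f ` {k\<in>J. \<forall>j\<in>D x. k \<le> perp j} \<subseteq> {k\<in>J. \<forall>j\<in>f ` D x. k \<le> perp j}"
      proof
        fix k assume "k \<in> f ` {k\<in>J. \<forall>j\<in>D x. k \<le> perp j}"
        then obtain k' where k': "k' \<in> J" "\<forall>j\<in>D x. k' \<le> perp j" "k = f k'" by blast
        have "\<forall>j\<in>f ` D x. k \<le> perp j"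
        proof
          fix j assume "j \<in> f ` D x"
          then obtain j' where j': "j' \<in> D x" "j = f j'" by blast
          hence j'J: "j' \<in> J" using DJ by blast
          show "k \<le> perp j" using adjJ[OF k'(1) j'J] j' k' by blast
        qed
        thus "k \<in> {k\<in>J. \<forall>j\<in>f ` D x. k \<le> perp j}" using fJJ k' by blast
      qed
      show "{k\<in>J. \<forall>j\<in>f ` D x. k \<le> perp j} \<subseteq> f ` {k\<in>J. \<forall>j\<in>D x. k \<le> perp j}"
      proof
        fix k assume k: "k \<in> {k\<in>J. \<forall>j\<in>f ` D x. k \<le> perp j}"
        then obtain k' where k': "k' \<in> J" "k = f k'" using fJ by auto
        have "\<forall>j\<in>D x. k' \<le> perp j"
        proof
          fix j assume j: "j \<in> D x"
          hence jJ: "j \<in> J" using DJ by blast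
          have "f j \<in> f ` D x" using j by blast
          hence "f k' \<le> perp (f j)" using k k' by blast
          thus "k' \<le> perp j" using adjJ[OF k'(1) jJ] by blast
        qed
        thus "k \<in> f ` {k\<in>J. \<forall>j\<in>D x. k \<le> perp j}" using k' by auto
      qed
    qed
    also have "\<dots> = D (perp (\<sigma> x))" using Dperp Ds by simp
    finally show "D (\<sigma> (perp x)) = D (perp (\<sigma> x))" .
  qed
  have sf: "\<sigma> a = f a" if aW: "a \<in> W1" for a
  proof (rule Dinj)
    have "D (f a) = f ` D a"
    proof
      show "D (f a) \<subseteq> f ` D a"
      proof
        fix j assume j: "j \<in> D (f a)"
        hence jJ: "j \<in> J" and jle: "j \<le> f a" unfolding D_def by auto
        from jJ obtain j' where j': "j' \<in> J" "j = f j'" using fJ by (metis imageE)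
        have "j' \<in> W1" using j' J1 by blast
        hence "j' \<le> a" using ford[of j' a] aW jle j' by simp
        thus "j \<in> f ` D a" using j' D_def by auto
      qed
      show "f ` D a \<subseteq> D (f a)"
      proof
        fix j assume "j \<in> f ` D a"
        then obtain j' where j': "j' \<in> J" "j' \<le> a" "j = f j'" unfolding D_def by blast
        have "j' \<in> W1" using j' J1 by blast
        hence "f j' \<le> f a" using ford[of j' a] aW j' by simp
        thus "j \<in> D (f a)" unfolding D_def using fJJ j' by blast
      qed
    qed
    thus "D (\<sigma> a) = D (f a)" using Ds by simp
  qed
  show "\<exists>\<sigma>. sd_aut perp \<sigma> \<and> \<sigma> ` W1 = W2"
  proof (intro exI conjI)
    show "sd_aut perp \<sigma>" unfolding sd_aut_def using sinj ssurj ssup sinf sperp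
      by (simp add: bij_def)
    show "\<sigma> ` W1 = W2" using sf bij by (simp add: bij_betw_def)
  qed
qed

end
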